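(* Let $\lambda_1,\lambda_2,\sigma_1,\sigma_2\in\mathbb{C}^*$ and $\eta_1,\eta_2\in\mathbb{C}$. Suppose that $V$ is a nonzero $\mathcal{G}$-submodule of the tensor product module $\Omega(\lambda_1,\eta_1,\sigma_1,0)\otimes\Omega(\lambda_2,\eta_2,0,\sigma_2)$. Then $1\otimes 1\in V$.
   Context: The planar Galilean conformal algebra $\mathcal{G}$ is the complex Lie algebra with basis $\{L_m,H_m,I_m,J_m\mid m\in\mathbb{Z}\}$ and brackets $[L_m,L_n]=(n-m)L_{m+n}$, $[L_m,H_n]=nH_{m+n}$, $[L_m,I_n]=(n-m)I_{m+n}$, $[L_m,J_n]=(n-m)J_{m+n}$, $[H_m,I_n]=I_{m+n}$, $[H_m,J_n]=-J_{m+n}$, and $[H_m,H_n]=[I_m,I_n]=[J_m,J_n]=[I_m,J_n]=0$ for all $m,n\in\mathbb{Z}$. For $\lambda,\sigma\in\mathbb{C}^*$, $\eta\in\mathbb{C}$, the module $\Omega(\lambda,\eta,\sigma,0)$ is $\mathbb{C}[X,Y]$ with $L_m f(X,Y)=\lambda^m(Y-mX+m\eta)f(X,Y-m)$, $H_m f(X,Y)=\lambda^m X f(X,Y-m)$, $I_m f(X,Y)=\lambda^m\sigma f(X-1,Y-m)$, $J_m f(X,Y)=0$. The module $\Omega(\lambda,\eta,0,\sigma)$ is $\mathbb{C}[S,T]$ with $L_m f(S,T)=\lambda^m(T+mS+m\eta)f(S,T-m)$, $H_m f(S,T)=\lambda^m S f(S,T-m)$, $I_m f(S,T)=0$, $J_m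 f(S,T)=\lambda^m\sigma f(S+1,T-m)$. The tensor product of $\mathcal{G}$-modules has action $x(v\otimes w)=xv\otimes w+v\otimes xw$. *)

theory Defs
  imports Complex_Main
begin

text \<open>Polynomials in two variables are represented by their polynomial functions
  \<open>complex \<Rightarrow> complex \<Rightarrow> complex\<close>; the tensor product
  \<open>C[X,Y] \<otimes> C[S,T]\<close> is identified with \<open>C[X,Y,S,T]\<close>, represented
  by polynomial functions in four variables (via \<open>f \<otimes> g \<mapsto> f(X,Y) g(S,T)\<close>).
  Since C is infinite, polynomials and polynomial functions correspond bijectively.\<close>

type_synonym pf4 = "complex \<Rightarrow> complex \<Rightarrow> complex \<Rightarrow> complex \<Rightarrow> complex"

definition poly4 :: "pf4 set" where
  "poly4 = {F. \<exists>A c. finite A \<and>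
     F = (\<lambda>x y s t. \<Sum>(a,b,d,e)\<in>A. c (a,b,d,e) * x ^ a * y ^ b * s ^ d * t ^ e)}"

definition OmA_L :: "complex \<Rightarrow> complex \<Rightarrow> int \<Rightarrow> (complex \<Rightarrow> complex \<Rightarrow> complex) \<Rightarrow> complex \<Rightarrow> complex \<Rightarrow> complex" where
  "OmA_L lam eta m f = (\<lambda>x y. lam powi m * (y - of_int m * x + of_int m * eta) * f x (y - of_int m))"
definition OmA_H :: "complex \<Rightarrow> int \<Rightarrow> (complex \<Rightarrow> complex \<Rightarrow> complex) \<Rightarrow> complex \<Rightarrow> complex \<Rightarrow> complex" where
  "OmA_H lam m f = (\<lambda>x y. lam powi m * x * f x (y - of_int m))"
definition OmA_I :: "complex \<Rightarrow> complex \<Rightarrow> int \<Rightarrow> (complex \<Rightarrow> complex \<Rightarrow> complex) \<Rightarrow> complex \<Rightarrow> complex \<Rightarrow> complex" where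
  "OmA_I lam sig m f = (\<lambda>x y. lam powi m * sig * f (x - 1) (y - of_int m))"
definition OmA_J :: "int \<Rightarrow> (complex \<Rightarrow> complex \<Rightarrow> complex) \<Rightarrow> complex \<Rightarrow> complex \<Rightarrow> complex" where
  "OmA_J m f = (\<lambda>x y. 0)"

definition OmB_L :: "complex \<Rightarrow> complex \<Rightarrow> int \<Rightarrow> (complex \<Rightarrow> complex \<Rightarrow> complex) \<Rightarrow> complex \<Rightarrow> complex \<Rightarrow> complex" where
  "OmB_L lam eta m f = (\<lambda>s t. lam powi m * (t + of_int m * s + of_int m * eta) * f s (t - of_int m))"
definition OmB_H :: "complex \<Rightarrow> int \<Rightarrow> (complex \<Rightarrow> complex \<Rightarrow> complex) \<Rightarrow> complex \<Rightarrow> complex \<Rightarrow> complex" where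
  "OmB_H lam m f = (\<lambda>s t. lam powi m * s * f s (t - of_int m))"
definition OmB_I :: "int \<Rightarrow> (complex \<Rightarrow> complex \<Rightarrow> complex) \<Rightarrow> complex \<Rightarrow> complex \<Rightarrow> complex" where
  "OmB_I m f = (\<lambda>s t. 0)"
definition OmB_J :: "complex \<Rightarrow> complex \<Rightarrow> int \<Rightarrow> (complex \<Rightarrow> complex \<Rightarrow> complex) \<Rightarrow> complex \<Rightarrow> complex \<Rightarrow> complex" where
  "OmB_J lam sig m f = (\<lambda>s t. lam powi m * sig * f (s + 1) (t - of_int m))"

text \<open>Tensor action \<open>x(v \<otimes> w) = xv \<otimes> w + v \<otimes> xw\<close>, extended linearly:
  the first operator acts on the variables X,Y, the second on S,T.\<close>
definition tens :: "((complex \<Rightarrow> complex \<Rightarrow> complex) \<Rightarrow> complex \<Rightarrow> complex \<Rightarrow> complex)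
   \<Rightarrow> ((complex \<Rightarrow> complex \<Rightarrow> complex) \<Rightarrow> complex \<Rightarrow> complex \<Rightarrow> complex) \<Rightarrow> pf4 \<Rightarrow> pf4" where
  "tens P Q F = (\<lambda>x y s t. P (\<lambda>x' y'. F x' y' s t) x y + Q (\<lambda>s' t'. F x y s' t') s t)"

definition is_submodule :: "complex \<Rightarrow> complex \<Rightarrow> complex \<Rightarrow> complex \<Rightarrow> complex \<Rightarrow> complex \<Rightarrow> pf4 set \<Rightarrow> bool" where
  "is_submodule l1 e1 s1 l2 e2 s2 V \<longleftrightarrow>
     V \<subseteq> poly4 \<and> (\<lambda>x y s t. 0) \<in> V \<and>
     (\<forall>F\<in>V. \<forall>G\<in>V. (\<lambda>x y s t. F x y s t + G x y s t) \<in> V) \<and>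
     (\<forall>F\<in>V. \<forall>c::complex. (\<lambda>x y s t. c * F x y s t) \<in> V) \<and>
     (\<forall>F\<in>V. \<forall>m::int.
        tens (OmA_L l1 e1 m) (OmB_L l2 e2 m) F \<in> V \<and>
        tens (OmA_H l1 m) (OmB_H l2 m) F \<in> V \<and>
        tens (OmA_I l1 s1 m) (OmB_I m) F \<in> V \<and>
        tens (OmA_J m) (OmB_J l2 s2 m) F \<in> V)"

end

theory Submission
  imports Defs "HOL-Computational_Algebra.Polynomial"
begin

inductive Dg :: "nat \<Rightarrow> pf4 \<Rightarrow> bool" where
  cst: "Dg (Suc k) (\<lambda>x y s t. c)"
| zer: "Dg k (\<lambda>x y s t. 0)"
| add: "Dg k F \<Longrightarrow> Dg k G \<Longrightarrow> Dg k (\<lambda>x y s t. F x y s t + G x y s t)"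
| mx: "Dg k F \<Longrightarrow> Dg (Suc k) (\<lambda>x y s t. x * F x y s t)"
| my: "Dg k F \<Longrightarrow> Dg (Suc k) (\<lambda>x y s t. y * F x y s t)"
| ms: "Dg k F \<Longrightarrow> Dg (Suc k) (\<lambda>x y s t. s * F x y s t)"
| mt: "Dg k F \<Longrightarrow> Dg (Suc k) (\<lambda>x y s t. t * F x y s t)"

lemma Dg0: "Dg k F \<Longrightarrow> k = 0 \<Longrightarrow> F = (\<lambda>x y s t. 0)"
  by (induction rule: Dg.induct) auto

lemma Dmono: "Dg k F \<Longrightarrow> Dg (Suc k) F"
  by (induction rule: Dg.induct) (auto intro: Dg.intros)

lemma Dmono': assumes "Dg k F" "k \<le> m" shows "Dg m F"
  using assms(2,1) by (induction m rule: dec_induct) (auto intro: Dmono)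

lemma Dscal: "Dg k F \<Longrightarrow> Dg k (\<lambda>x y s t. c * F x y s t)"
proof (induction rule: Dg.induct)
  case (cst k c')
  then show ?case using Dg.cst[of k "c*c'"] by simp
next
  case (zer k)
  then show ?case using Dg.zer[of k] by simp
next
  case (add k F G)
  then show ?case using Dg.add[OF add.IH] by (simp add: distrib_left)
next
  case (mx k F)
  then show ?case using Dg.mx[OF mx.IH] by (simp add: mult.left_commute)
next
  case (my k F)
  then show ?case using Dg.my[OF my.IH] by (simp add: mult.left_commute)
next
  case (ms k F)
  then show ?case using Dg.ms[OF ms.IH] by (simp add: mult.left_commute)
next
  case (mt k F)
  then show ?case using Dg.mt[OF mt.IH] by (simp add: mult.left_commute)
qed

definition shf :: "complex \<Rightarrow> complex \<Rightarrow> complex \<Rightarrow> complex \<Rightarrow> pf4 \<Rightarrow> pf4" where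
  "shf a b c d F = (\<lambda>x y s t. F (x+a) (y+b) (s+c) (t+d))"

lemma Dshf: "Dg k F \<Longrightarrow> Dg k (shf a b c d F)"
proof (induction rule: Dg.induct)
  case (cst k c')
  then show ?case by (simp add: shf_def Dg.cst)
next
  case (zer k)
  then show ?case by (simp add: shf_def Dg.zer)
next
  case (add k F G)
  then show ?case using Dg.add[OF add.IH] by (simp add: shf_def)
next
  case (mx k F)
  have "Dg (Suc k) (\<lambda>x y s t. x * shf a b c d F x y s t + a * shf a b c d F x y s t)"
    by (intro Dg.add Dg.mx Dmono Dscal mx.IH)
  then show ?case by (simp add: shf_def distrib_right)
next
  case (my k F)
  have "Dg (Suc k) (\<lambda>x y s t. y * shf a b c d F x y s t + b * shf a b c d F x y s t)"
    by (intro Dg.add Dg.my Dmono Dscal my.IH)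
  then show ?case by (simp add: shf_def distrib_right)
next
  case (ms k F)
  have "Dg (Suc k) (\<lambda>x y s t. s * shf a b c d F x y s t + c * shf a b c d F x y s t)"
    by (intro Dg.add Dg.ms Dmono Dscal ms.IH)
  then show ?case by (simp add: shf_def distrib_right)
next
  case (mt k F)
  have "Dg (Suc k) (\<lambda>x y s t. t * shf a b c d F x y s t + d * shf a b c d F x y s t)"
    by (intro Dg.add Dg.mt Dmono Dscal mt.IH)
  then show ?case by (simp add: shf_def distrib_right)
qed


lemma Ddiff: "Dg n F \<Longrightarrow> Dg (n - 1) (\<lambda>x y s t. shf a b c d F x y s t - F x y s t)"
proof (induction rule: Dg.induct)
  case (cst k c')
  then show ?case by (simp add: shf_def Dg.zer)
next
  case (zer k)
  then show ?case by (simp add: shf_def Dg.zer)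
next
  case (add k F G)
  then show ?case using Dg.add[OF add.IH] by (simp add: shf_def algebra_simps)
next
  case (mx k F)
  show ?case
  proof (cases k)
    case 0
    then show ?thesis using Dg0[OF mx.hyps] by (simp add: shf_def Dg.zer)
  next
    case (Suc j)
    have "Dg (Suc j) (\<lambda>x y s t. x * (shf a b c d F x y s t - F x y s t) + a * shf a b c d F x y s t)"
      using mx.IH mx.hyps Suc by (intro Dg.add Dg.mx Dscal Dshf) auto
    then show ?thesis using Suc by (simp add: shf_def algebra_simps)
  qed
next
  case (my k F)
  show ?case
  proof (cases k)
    case 0
    then show ?thesis using Dg0[OF my.hyps] by (simp add: shf_def Dg.zer)
  next
    case (Suc j)
    have "Dg (Suc j) (\<lambda>x y s t. y * (shf a b c d F x y s t - F x y s t) + b * shf a b c d F x y s t)"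
      using my.IH my.hyps Suc by (intro Dg.add Dg.my Dscal Dshf) auto
    then show ?thesis using Suc by (simp add: shf_def algebra_simps)
  qed
next
  case (ms k F)
  show ?case
  proof (cases k)
    case 0
    then show ?thesis using Dg0[OF ms.hyps] by (simp add: shf_def Dg.zer)
  next
    case (Suc j)
    have "Dg (Suc j) (\<lambda>x y s t. s * (shf a b c d F x y s t - F x y s t) + c * shf a b c d F x y s t)"
      using ms.IH ms.hyps Suc by (intro Dg.add Dg.ms Dscal Dshf) auto
    then show ?thesis using Suc by (simp add: shf_def algebra_simps)
  qed
next
  case (mt k F)
  show ?case
  proof (cases k)
    case 0
    then show ?thesis using Dg0[OF mt.hyps] by (simp add: shf_def Dg.zer)
  next
    case (Suc j)
    have "Dg (Suc j) (\<lambda>x y s t. t * (shf a b c d F x y s t - F x y s t) + d * shf a b c d F x y s t)"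
      using mt.IH mt.hyps Suc by (intro Dg.add Dg.mt Dscal Dshf) auto
    then show ?thesis using Suc by (simp add: shf_def algebra_simps)
  qed
qed

lemma Dpx: "Dg k F \<Longrightarrow> Dg (k + n) (\<lambda>x y s t. x ^ n * F x y s t)"
proof (induction n)
  case 0 then show ?case by simp
next
  case (Suc n) then show ?case using Dg.mx[OF Suc.IH[OF Suc.prems]] by (simp add: mult.assoc)
qed

lemma Dpy: "Dg k F \<Longrightarrow> Dg (k + n) (\<lambda>x y s t. y ^ n * F x y s t)"
proof (induction n)
  case 0 then show ?case by simp
next
  case (Suc n) then show ?case using Dg.my[OF Suc.IH[OF Suc.prems]] by (simp add: mult.assoc)
qed

lemma Dps: "Dg k F \<Longrightarrow> Dg (k + n) (\<lambda>x y s t. s ^ n * F x y s t)"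
proof (induction n)
  case 0 then show ?case by simp
next
  case (Suc n) then show ?case using Dg.ms[OF Suc.IH[OF Suc.prems]] by (simp add: mult.assoc)
qed

lemma Dpt: "Dg k F \<Longrightarrow> Dg (k + n) (\<lambda>x y s t. t ^ n * F x y s t)"
proof (induction n)
  case 0 then show ?case by simp
next
  case (Suc n) then show ?case using Dg.mt[OF Suc.IH[OF Suc.prems]] by (simp add: mult.assoc)
qed

lemma Dmon: "Dg (Suc (e + d + b + a)) (\<lambda>x y s t. c * x ^ a * y ^ b * s ^ d * t ^ e)"
proof -
  have "Dg (Suc 0) (\<lambda>x y s t. c)" by (rule Dg.cst)
  from Dpx[OF Dpy[OF Dps[OF Dpt[OF this]]], of e d b a]
  show ?thesis by (simp add: mult_ac)
qed

lemma Dsum: "finite A \<Longrightarrow> \<exists>k. Dg k (\<lambda>x y s t. \<Sum>(a,b,d,e)\<in>A. c (a,b,d,e) * x ^ a * y ^ b * s ^ d * t ^ e)"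
proof (induction A rule: finite_induct)
  case empty
  then show ?case using Dg.zer by auto
next
  case (insert p A)
  then obtain k where k: "Dg k (\<lambda>x y s t. \<Sum>(a,b,d,e)\<in>A. c (a,b,d,e) * x ^ a * y ^ b * s ^ d * t ^ e)" by blast
  obtain a b d e where p: "p = (a,b,d,e)" by (cases p) auto
  have m: "Dg (Suc (e + d + b + a)) (\<lambda>x y s t. c (a,b,d,e) * x ^ a * y ^ b * s ^ d * t ^ e)"
    by (rule Dmon)
  have "Dg (max k (Suc (e + d + b + a))) (\<lambda>x y s t. c (a,b,d,e) * x ^ a * y ^ b * s ^ d * t ^ e
      + (\<Sum>(a,b,d,e)\<in>A. c (a,b,d,e) * x ^ a * y ^ b * s ^ d * t ^ e))"
    by (intro Dg.add Dmono'[OF m] Dmono'[OF k]) auto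
  then show ?case using insert p by auto
qed

lemma poly4_D: "F \<in> poly4 \<Longrightarrow> \<exists>k. Dg k F"
  unfolding poly4_def using Dsum by blast


lemma slx: "Dg k F \<Longrightarrow> \<exists>p. \<forall>x. F x y s t = poly p x"
proof (induction rule: Dg.induct)
  case (cst k c) then show ?case by (intro exI[of _ "[:c:]"]) simp
next
  case (zer k) then show ?case by (intro exI[of _ 0]) simp
next
  case (add k F G) then obtain p q where "\<forall>x. F x y s t = poly p x" "\<forall>x. G x y s t = poly q x" by blast
  then show ?case by (intro exI[of _ "p + q"]) simp
next
  case (mx k F) then obtain p where "\<forall>x. F x y s t = poly p x" by blast
  then show ?case by (intro exI[of _ "[:0,1:] * p"]) simp
next
  case (my k F) then obtain p where "\<forall>x. F x y s t = poly p x" by blast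
  then show ?case by (intro exI[of _ "smult y p"]) simp
next
  case (ms k F) then obtain p where "\<forall>x. F x y s t = poly p x" by blast
  then show ?case by (intro exI[of _ "smult s p"]) simp
next
  case (mt k F) then obtain p where "\<forall>x. F x y s t = poly p x" by blast
  then show ?case by (intro exI[of _ "smult t p"]) simp
qed

lemma sly: "Dg k F \<Longrightarrow> \<exists>p. \<forall>y. F x y s t = poly p y"
proof (induction rule: Dg.induct)
  case (cst k c) then show ?case by (intro exI[of _ "[:c:]"]) simp
next
  case (zer k) then show ?case by (intro exI[of _ 0]) simp
next
  case (add k F G) then obtain p q where "\<forall>y. F x y s t = poly p y" "\<forall>y. G x y s t = poly q y" by blast
  then show ?case by (intro exI[of _ "p + q"]) simp
next
  case (mx k F) then obtain p where "\<forall>y. F x y s t = poly p y" by blast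
  then show ?case by (intro exI[of _ "smult x p"]) simp
next
  case (my k F) then obtain p where "\<forall>y. F x y s t = poly p y" by blast
  then show ?case by (intro exI[of _ "[:0,1:] * p"]) simp
next
  case (ms k F) then obtain p where "\<forall>y. F x y s t = poly p y" by blast
  then show ?case by (intro exI[of _ "smult s p"]) simp
next
  case (mt k F) then obtain p where "\<forall>y. F x y s t = poly p y" by blast
  then show ?case by (intro exI[of _ "smult t p"]) simp
qed

lemma sls: "Dg k F \<Longrightarrow> \<exists>p. \<forall>s. F x y s t = poly p s"
proof (induction rule: Dg.induct)
  case (cst k c) then show ?case by (intro exI[of _ "[:c:]"]) simp
next
  case (zer k) then show ?case by (intro exI[of _ 0]) simp
next
  case (add k F G) then obtain p q where "\<forall>s. F x y s t = poly p s" "\<forall>s. G x y s t = poly q s" by blast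
  then show ?case by (intro exI[of _ "p + q"]) simp
next
  case (mx k F) then obtain p where "\<forall>s. F x y s t = poly p s" by blast
  then show ?case by (intro exI[of _ "smult x p"]) simp
next
  case (my k F) then obtain p where "\<forall>s. F x y s t = poly p s" by blast
  then show ?case by (intro exI[of _ "smult y p"]) simp
next
  case (ms k F) then obtain p where "\<forall>s. F x y s t = poly p s" by blast
  then show ?case by (intro exI[of _ "[:0,1:] * p"]) simp
next
  case (mt k F) then obtain p where "\<forall>s. F x y s t = poly p s" by blast
  then show ?case by (intro exI[of _ "smult t p"]) simp
qed

lemma slt: "Dg k F \<Longrightarrow> \<exists>p. \<forall>t. F x y s t = poly p t"
proof (induction rule: Dg.induct)
  case (cst k c) then show ?case by (intro exI[of _ "[:c:]"]) simp
next
  case (zer k) then show ?case by (intro exI[of _ 0]) simp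
next
  case (add k F G) then obtain p q where "\<forall>t. F x y s t = poly p t" "\<forall>t. G x y s t = poly q t" by blast
  then show ?case by (intro exI[of _ "p + q"]) simp
next
  case (mx k F) then obtain p where "\<forall>t. F x y s t = poly p t" by blast
  then show ?case by (intro exI[of _ "smult x p"]) simp
next
  case (my k F) then obtain p where "\<forall>t. F x y s t = poly p t" by blast
  then show ?case by (intro exI[of _ "smult y p"]) simp
next
  case (ms k F) then obtain p where "\<forall>t. F x y s t = poly p t" by blast
  then show ?case by (intro exI[of _ "smult s p"]) simp
next
  case (mt k F) then obtain p where "\<forall>t. F x y s t = poly p t" by blast
  then show ?case by (intro exI[of _ "[:0,1:] * p"]) simp
qed

lemma periodic_const:
  fixes p :: "complex poly"
  assumes "\<forall>z. poly p (z + 1) = poly p z"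
  shows "poly p z = poly p 0"
proof -
  obtain c where c: "c = poly p 0" by blast
  define q where "q = p - [:c:]"
  have r: "poly q (of_nat n) = 0" for n
  proof (induction n)
    case 0 then show ?case by (simp add: q_def c)
  next
    case (Suc n) then show ?case using assms[rule_format, of "of_nat n"] by (simp add: q_def c add.commute)
  qed
  have "q = 0"
  proof (rule ccontr)
    assume "q \<noteq> 0"
    then have "finite {x. poly q x = 0}" by (rule poly_roots_finite)
    moreover have "range (of_nat :: nat \<Rightarrow> complex) \<subseteq> {x. poly q x = 0}" using r by auto
    moreover have "infinite (range (of_nat :: nat \<Rightarrow> complex))"
      by (intro range_inj_infinite) (simp add: inj_on_def)
    ultimately show False using finite_subset by blast
  qed
  then have "p = [:c:]" by (simp add: q_def)
  then have "poly p z = c" by simp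
  with c show ?thesis by simp
qed


lemma Dconst:
  assumes D: "Dg k F"
    and H1: "\<And>x y s t. F (x-1) y s t = F x y s t"
    and H2: "\<And>x y s t. F (x-1) (y-1) s t = F x y s t"
    and H3: "\<And>x y s t. F x y (s+1) t = F x y s t"
    and H4: "\<And>x y s t. F x y (s+1) (t-1) = F x y s t"
  shows "F x y s t = F 0 0 0 0"
proof -
  have Hx: "F (z+1) y s t = F z y s t" for z y s t using H1[of "z+1"] by simp
  have Hy: "F x (z+1) s t = F x z s t" for x z s t
    using H2[of "x+1" "z+1"] H1[of "x+1" "z+1"] by simp
  have Ht: "F x y s (z+1) = F x y s z" for x y s z
    using H4[of x y s "z+1"] H3[of x y s z] by simp
  have ex: "F x y s t = F 0 y s t" for x y s t
  proof -
    obtain p where p: "\<forall>x. F x y s t = poly p x" using slx[OF D] by blast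
    have "\<forall>z. poly p (z + 1) = poly p z" using p Hx by metis
    then show ?thesis using periodic_const[of p x] p by simp
  qed
  have ey: "F 0 y s t = F 0 0 s t" for y s t
  proof -
    obtain p where p: "\<forall>y. F 0 y s t = poly p y" using sly[OF D] by blast
    have "\<forall>z. poly p (z + 1) = poly p z" using p Hy by metis
    then show ?thesis using periodic_const[of p y] p by simp
  qed
  have es: "F 0 0 s t = F 0 0 0 t" for s t
  proof -
    obtain p where p: "\<forall>s. F 0 0 s t = poly p s" using sls[OF D] by blast
    have "\<forall>z. poly p (z + 1) = poly p z" using p H3 by metis
    then show ?thesis using periodic_const[of p s] p by simp
  qed
  have et: "F 0 0 0 t = F 0 0 0 0" for t
  proof -
    obtain p where p: "\<forall>t. F 0 0 0 t = poly p t" using slt[OF D] by blast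
    have "\<forall>z. poly p (z + 1) = poly p z" using p Ht by metis
    then show ?thesis using periodic_const[of p t] p by simp
  qed
  show ?thesis using ex[of x y s t] ey[of y s t] es[of s t] et[of t] by simp
qed


locale subm =
  fixes l1 l2 s1 s2 e1 e2 :: complex and V :: "pf4 set"
  assumes nz: "l1 \<noteq> 0" "l2 \<noteq> 0" "s1 \<noteq> 0" "s2 \<noteq> 0"
    and sub: "is_submodule l1 e1 s1 l2 e2 s2 V"
begin

lemma addV: "F \<in> V \<Longrightarrow> G \<in> V \<Longrightarrow> (\<lambda>x y s t. F x y s t + G x y s t) \<in> V"
  using sub unfolding is_submodule_def by blast

lemma scalV: "F \<in> V \<Longrightarrow> (\<lambda>x y s t. c * F x y s t) \<in> V"
  using sub unfolding is_submodule_def by blast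

lemma diffV: "F \<in> V \<Longrightarrow> G \<in> V \<Longrightarrow> (\<lambda>x y s t. G x y s t - F x y s t) \<in> V"
  using addV[OF _ scalV[of F "-1"], of G] by simp

lemma IV: "F \<in> V \<Longrightarrow> tens (OmA_I l1 s1 m) (OmB_I m) F \<in> V"
  using sub unfolding is_submodule_def by blast

lemma JV: "F \<in> V \<Longrightarrow> tens (OmA_J m) (OmB_J l2 s2 m) F \<in> V"
  using sub unfolding is_submodule_def by blast

lemma sh1: assumes "F \<in> V" shows "shf (-1) 0 0 0 F \<in> V"
proof -
  have "(\<lambda>x y s t. inverse s1 * tens (OmA_I l1 s1 0) (OmB_I 0) F x y s t) \<in> V"
    using scalV[OF IV[OF assms]] .
  moreover have "(\<lambda>x y s t. inverse s1 * tens (OmA_I l1 s1 0) (OmB_I 0) F x y s t) = shf (-1) 0 0 0 F"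
    using nz by (intro ext) (simp add: tens_def OmA_I_def OmB_I_def shf_def)
  ultimately show ?thesis by simp
qed

lemma sh2: assumes "F \<in> V" shows "shf (-1) (-1) 0 0 F \<in> V"
proof -
  have "(\<lambda>x y s t. inverse (l1 * s1) * tens (OmA_I l1 s1 1) (OmB_I 1) F x y s t) \<in> V"
    using scalV[OF IV[OF assms]] .
  moreover have "(\<lambda>x y s t. inverse (l1 * s1) * tens (OmA_I l1 s1 1) (OmB_I 1) F x y s t) = shf (-1) (-1) 0 0 F"
    using nz by (intro ext) (simp add: tens_def OmA_I_def OmB_I_def shf_def field_simps)
  ultimately show ?thesis by simp
qed

lemma sh3: assumes "F \<in> V" shows "shf 0 0 1 0 F \<in> V"
proof -
  have "(\<lambda>x y s t. inverse s2 * tens (OmA_J 0) (OmB_J l2 s2 0) F x y s t) \<in> V"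
    using scalV[OF JV[OF assms]] .
  moreover have "(\<lambda>x y s t. inverse s2 * tens (OmA_J 0) (OmB_J l2 s2 0) F x y s t) = shf 0 0 1 0 F"
    using nz by (intro ext) (simp add: tens_def OmA_J_def OmB_J_def shf_def)
  ultimately show ?thesis by simp
qed

lemma sh4: assumes "F \<in> V" shows "shf 0 0 1 (-1) F \<in> V"
proof -
  have "(\<lambda>x y s t. inverse (l2 * s2) * tens (OmA_J 1) (OmB_J l2 s2 1) F x y s t) \<in> V"
    using scalV[OF JV[OF assms]] .
  moreover have "(\<lambda>x y s t. inverse (l2 * s2) * tens (OmA_J 1) (OmB_J l2 s2 1) F x y s t) = shf 0 0 1 (-1) F"
    using nz by (intro ext) (simp add: tens_def OmA_J_def OmB_J_def shf_def field_simps)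
  ultimately show ?thesis by simp
qed

lemma step: "Dg n F \<Longrightarrow> F \<in> V \<Longrightarrow> F \<noteq> (\<lambda>x y s t. 0) \<Longrightarrow> \<exists>c. c \<noteq> 0 \<and> (\<lambda>x y s t. c) \<in> V"
proof (induction n arbitrary: F)
  case 0
  then show ?case using Dg0 by blast
next
  case (Suc n)
  let ?d = "\<lambda>a b c d. (\<lambda>x y s t. shf a b c d F x y s t - F x y s t)"
  have dD: "Dg n (?d a b c d)" for a b c d using Ddiff[OF Suc.prems(1)] by simp
  have V1: "?d (-1) 0 0 0 \<in> V" by (rule diffV[OF Suc.prems(2) sh1[OF Suc.prems(2)]])
  have V2: "?d (-1) (-1) 0 0 \<in> V" by (rule diffV[OF Suc.prems(2) sh2[OF Suc.prems(2)]])
  have V3: "?d 0 0 1 0 \<in> V" by (rule diffV[OF Suc.prems(2) sh3[OF Suc.prems(2)]])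
  have V4: "?d 0 0 1 (-1) \<in> V" by (rule diffV[OF Suc.prems(2) sh4[OF Suc.prems(2)]])
  show ?case
  proof (cases "?d (-1) 0 0 0 = (\<lambda>x y s t. 0)")
    case False then show ?thesis using Suc.IH[OF dD V1] by blast
  next
    case T1: True
    show ?thesis
    proof (cases "?d (-1) (-1) 0 0 = (\<lambda>x y s t. 0)")
      case False then show ?thesis using Suc.IH[OF dD V2] by blast
    next
      case T2: True
      show ?thesis
      proof (cases "?d 0 0 1 0 = (\<lambda>x y s t. 0)")
        case False then show ?thesis using Suc.IH[OF dD V3] by blast
      next
        case T3: True
        show ?thesis
        proof (cases "?d 0 0 1 (-1) = (\<lambda>x y s t. 0)")
          case False then show ?thesis using Suc.IH[OF dD V4] by blast
        next
          case T4: True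
          have H1: "F (x-1) y s t = F x y s t" for x y s t
            using fun_cong[OF fun_cong[OF fun_cong[OF fun_cong[OF T1, of x], of y], of s], of t]
            by (simp add: shf_def)
          have H2: "F (x-1) (y-1) s t = F x y s t" for x y s t
            using fun_cong[OF fun_cong[OF fun_cong[OF fun_cong[OF T2, of x], of y], of s], of t]
            by (simp add: shf_def)
          have H3: "F x y (s+1) t = F x y s t" for x y s t
            using fun_cong[OF fun_cong[OF fun_cong[OF fun_cong[OF T3, of x], of y], of s], of t]
            by (simp add: shf_def)
          have H4: "F x y (s+1) (t-1) = F x y s t" for x y s t
            using fun_cong[OF fun_cong[OF fun_cong[OF fun_cong[OF T4, of x], of y], of s], of t]
            by (simp add: shf_def)
          have Fc: "F x y s t = F 0 0 0 0" for x y s t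
            by (rule Dconst[OF Suc.prems(1)]) (fact H1, fact H2, fact H3, fact H4)
          then have "F = (\<lambda>x y s t. F 0 0 0 0)" by (intro ext) simp
          moreover then have "F 0 0 0 0 \<noteq> 0" using Suc.prems(3) by auto
          ultimately show ?thesis using Suc.prems(2) by (intro exI[of _ "F 0 0 0 0"]) simp
        qed
      qed
    qed
  qed
qed

end

theorem lemma3p1:
  fixes l1 l2 s1 s2 e1 e2 :: complex and V :: "pf4 set"
  assumes "l1 \<noteq> 0" and "l2 \<noteq> 0" and "s1 \<noteq> 0" and "s2 \<noteq> 0"
    and "is_submodule l1 e1 s1 l2 e2 s2 V"
    and "V \<noteq> {\<lambda>x y s t. 0}"
  shows "(\<lambda>x y s t. 1) \<in> V"
proof -
  interpret subm l1 l2 s1 s2 e1 e2 V using assms by unfold_locales auto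
  have z: "(\<lambda>x y s t. 0) \<in> V" and sp: "V \<subseteq> poly4" using assms(5) unfolding is_submodule_def by blast+
  obtain F where F: "F \<in> V" "F \<noteq> (\<lambda>x y s t. 0)" using z assms(6) by blast
  obtain k where "Dg k F" using poly4_D F sp by blast
  then obtain c where c: "c \<noteq> 0" "(\<lambda>x y s t. c) \<in> V" using step F by blast
  have "(\<lambda>x y s t. inverse c * c) \<in> V" using scalV[OF c(2)] .
  then show ?thesis using c(1) by simp
qed

end
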